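(* For all integers $l\ge1$ and $n\ge1$, the colored Eulerian polynomial $A_n^{(l)}(t)=\sum_{\pi\in C_l\wr\mathfrak{S}_n}t^{\mathrm{fexc}(\pi)}$ is $t$-symmetric and log-concave; in particular it is $t$-unimodal.
   Context: $C_l\wr\mathfrak{S}_n$ is the set of words $\pi=\pi_1\cdots\pi_n$ with $\pi_i=|\pi_i|^{\epsilon_i}$, $\epsilon_i\in\{0,\dots,l-1\}$, and $|\pi_1|\cdots|\pi_n|\in\mathfrak{S}_n$. $\mathrm{exc}(\pi)$ is the number of $i$ with $\epsilon_i=0$ and $|\pi_i|>i$, and $\mathrm{fexc}(\pi)=l\cdot\mathrm{exc}(\pi)+\sum_{i=1}^n\epsilon_i$. A nonzero polynomial $\sum_{i=r}^sa_it^i$ with $a_r,a_s\ne0$ is $t$-symmetric if $a_{r+k}=a_{s-k}$ for all $0\le k\le s-r$; it is log-concave if $a_k^2\ge a_{k-1}a_{k+1}$ for $r<k<s$; it is $t$-unimodal if $a_r\le a_{r+1}\le\dots\le a_{\lfloor(r+s)/2\rfloor}$ and $a_{\lfloor(r+s+1)/2\rfloor}\ge\dots\ge a_s$. *)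

theory Defs
  imports "HOL-Computational_Algebra.Polynomial" "HOL-Combinatorics.Permutations"
begin

text \<open>Colored permutations C_l wr S_n: a pair (sigma, eps) where sigma is a permutation
  of {1..n} (identity outside) giving |pi_i| = sigma i, and eps i in {0..<l} is the color
  of position i (eps fixed to 0 outside {1..n}, so that the representation is unique).\<close>

definition colored_perms :: "nat \<Rightarrow> nat \<Rightarrow> ((nat \<Rightarrow> nat) \<times> (nat \<Rightarrow> nat)) set" where
  "colored_perms l n = {(\<sigma>, \<epsilon>). \<sigma> permutes {1..n} \<and> (\<forall>i\<in>{1..n}. \<epsilon> i < l)
       \<and> (\<forall>i. i \<notin> {1..n} \<longrightarrow> \<epsilon> i = 0)}"

definition exc_col :: "nat \<Rightarrow> (nat \<Rightarrow> nat) \<times> (nat \<Rightarrow> nat) \<Rightarrow> nat" where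
  "exc_col n p = card {i\<in>{1..n}. snd p i = 0 \<and> fst p i > i}"

definition fexc :: "nat \<Rightarrow> nat \<Rightarrow> (nat \<Rightarrow> nat) \<times> (nat \<Rightarrow> nat) \<Rightarrow> nat" where
  "fexc l n p = l * exc_col n p + (\<Sum>i=1..n. snd p i)"

definition colored_eulerian :: "nat \<Rightarrow> nat \<Rightarrow> nat poly" where
  "colored_eulerian l n = (\<Sum>p\<in>colored_perms l n. monom 1 (fexc l n p))"

definition low_deg :: "'a::zero poly \<Rightarrow> nat" where
  "low_deg p = (LEAST i. coeff p i \<noteq> 0)"

definition t_symmetric :: "'a::zero poly \<Rightarrow> bool" where
  "t_symmetric p \<longleftrightarrow> p \<noteq> 0 \<and>
     (\<forall>k\<le>degree p - low_deg p. coeff p (low_deg p + k) = coeff p (degree p - k))"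

definition log_concave_poly :: "'a::linordered_semidom poly \<Rightarrow> bool" where
  "log_concave_poly p \<longleftrightarrow> p \<noteq> 0 \<and>
     (\<forall>k. low_deg p < k \<and> k < degree p \<longrightarrow> coeff p k ^ 2 \<ge> coeff p (k - 1) * coeff p (k + 1))"

definition t_unimodal :: "'a::{zero,linorder} poly \<Rightarrow> bool" where
  "t_unimodal p \<longleftrightarrow> p \<noteq> 0 \<and>
     (\<forall>i j. low_deg p \<le> i \<and> i \<le> j \<and> j \<le> (low_deg p + degree p) div 2
              \<longrightarrow> coeff p i \<le> coeff p j) \<and>
     (\<forall>i j. (low_deg p + degree p + 1) div 2 \<le> i \<and> i \<le> j \<and> j \<le> degree p
              \<longrightarrow> coeff p j \<le> coeff p i)"

end

theory Submission
  imports Defs Complex_Main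
begin


definition excp :: "nat \<Rightarrow> (nat \<Rightarrow> nat) \<Rightarrow> nat" where
  "excp n s = card {i\<in>{1..n}. s i > i}"

definition Eul :: "nat \<Rightarrow> nat poly" where
  "Eul n = (\<Sum>s\<in>{s. s permutes {1..n}}. monom 1 (excp n s))"




definition Ql :: "nat \<Rightarrow> nat poly" where
  "Ql l = (\<Sum>e<l. monom 1 e)"

lemma monom_sum: "finite S \<Longrightarrow> monom (1::'a::comm_semiring_1) (\<Sum>i\<in>S. f i) = (\<Prod>i\<in>S. monom 1 (f i))"
proof (induction S rule: finite_induct)
  case (insert x F)
  have "monom (1::'a) (f x + sum f F) = monom 1 (f x) * monom 1 (sum f F)" by (simp add: mult_monom)
  then show ?case using insert by simp
qed simp

definition colset :: "nat \<Rightarrow> nat \<Rightarrow> (nat \<Rightarrow> nat) set" where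
  "colset l n = {\<epsilon>. (\<forall>i\<in>{1..n}. \<epsilon> i < l) \<and> (\<forall>i. i \<notin> {1..n} \<longrightarrow> \<epsilon> i = 0)}"

definition ext0 :: "nat \<Rightarrow> (nat \<Rightarrow> nat) \<Rightarrow> (nat \<Rightarrow> nat)" where
  "ext0 n g = (\<lambda>i. if i \<in> {1..n} then g i else 0)"

lemma colset_sum:
  "(\<Sum>\<epsilon>\<in>colset l n. h \<epsilon>) = (\<Sum>g\<in>PiE {1..n} (\<lambda>_. {..<l}). h (ext0 n g))"
proof (rule sum.reindex_bij_witness[where i="ext0 n" and j="\<lambda>e. restrict e {1..n}"])
  fix a assume "a \<in> colset l n" then show "ext0 n (restrict a {1..n}) = a"
    by (auto simp: colset_def ext0_def fun_eq_iff)
next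
  fix a assume "a \<in> colset l n" then show "restrict a {1..n} \<in> PiE {1..n} (\<lambda>_. {..<l})"
    by (auto simp: colset_def)
next
  fix b assume "b \<in> PiE {1..n} (\<lambda>_. {..<l})" then show "restrict (ext0 n b) {1..n} = b"
    by (auto simp: ext0_def fun_eq_iff PiE_def extensional_def)
next
  fix b assume "b \<in> PiE {1..n} (\<lambda>_. {..<l})" then show "ext0 n b \<in> colset l n"
    by (auto simp: ext0_def colset_def)
qed (auto simp: colset_def ext0_def fun_eq_iff intro!: arg_cong[where f=h])

lemma colset_finite: "finite (colset l n)"
proof -
  have "colset l n = ext0 n ` PiE {1..n} (\<lambda>_. {..<l})"
  proof
    show "colset l n \<subseteq> ext0 n ` PiE {1..n} (\<lambda>_. {..<l})"
    proof
      fix a assume a: "a \<in> colset l n"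
      then have "ext0 n (restrict a {1..n}) = a" by (auto simp: colset_def ext0_def fun_eq_iff)
      moreover have "restrict a {1..n} \<in> PiE {1..n} (\<lambda>_. {..<l})" using a by (auto simp: colset_def)
      ultimately show "a \<in> ext0 n ` PiE {1..n} (\<lambda>_. {..<l})" by (metis image_eqI)
    qed
  qed (auto simp: ext0_def colset_def)
  then show ?thesis by (simp add: finite_PiE)
qed

lemma colored_perms_eq: "colored_perms l n = Sigma {s. s permutes {1..n}} (\<lambda>_. colset l n)"
  by (auto simp: colored_perms_def colset_def)

lemma card_filter_sum: "finite A \<Longrightarrow> card {i\<in>A. P i} = (\<Sum>i\<in>A. if P i then 1 else 0)"
  by (simp add: sum.If_cases Int_def)

lemma fexc_ext0:
  assumes "g \<in> PiE {1..n} (\<lambda>_. {..<l})"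
  shows "monom (1::nat) (fexc l n (s, ext0 n g)) =
     (\<Prod>i\<in>{1..n}. monom 1 (if g i = 0 \<and> s i > i then l else g i))"
proof -
  have "fexc l n (s, ext0 n g) = (\<Sum>i\<in>{1..n}. if g i = 0 \<and> s i > i then l else g i)"
  proof -
    have "card {i\<in>{1..n}. ext0 n g i = 0 \<and> s i > i} = card {i\<in>{1..n}. g i = 0 \<and> s i > i}"
      by (rule arg_cong[where f=card]) (auto simp: ext0_def)
    also have "\<dots> = (\<Sum>i\<in>{1..n}. if g i = 0 \<and> s i > i then 1 else 0)"
      by (rule card_filter_sum) simp
    finally have c: "exc_col n (s, ext0 n g) = (\<Sum>i\<in>{1..n}. if g i = 0 \<and> s i > i then 1 else 0)"
      by (simp add: exc_col_def)
    have "(\<Sum>i=1..n. snd (s, ext0 n g) i) = (\<Sum>i\<in>{1..n}. g i)"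
      by (auto simp: ext0_def intro!: sum.cong)
    then have "fexc l n (s, ext0 n g) = (\<Sum>i\<in>{1..n}. l * (if g i = 0 \<and> s i > i then 1 else 0) + g i)"
      by (simp add: fexc_def c sum_distrib_left sum.distrib)
    also have "\<dots> = (\<Sum>i\<in>{1..n}. if g i = 0 \<and> s i > i then l else g i)"
      by (rule sum.cong) auto
    finally show ?thesis .
  qed
  then show ?thesis by (simp only: monom_sum finite_atLeastAtMost)
qed

lemma inner_sum:
  assumes "l \<ge> 1"
  shows "(\<Sum>e<l. monom (1::nat) (if e = 0 \<and> P then l else e)) = Ql l * monom 1 (if P then 1 else 0)"
proof (cases P)
  case False
  have "monom (1::nat) 0 = 1" by (simp add: monom_0 one_pCons)
  then show ?thesis using False by (simp add: Ql_def)
next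
  case True
  obtain m where l: "l = Suc m" using assms by (cases l) auto
  have "Ql l * monom 1 1 = (\<Sum>e<l. monom 1 (Suc e))"
    by (simp add: Ql_def sum_distrib_right mult_monom)
  also have "\<dots> = (\<Sum>e<m. monom 1 (Suc e)) + monom 1 l" by (simp add: l)
  also have "(\<Sum>e<l. monom (1::nat) (if e = 0 \<and> P then l else e)) = monom 1 l + (\<Sum>e<m. monom 1 (Suc e))"
    unfolding l sum.lessThan_Suc_shift using True by simp
  ultimately show ?thesis using True by (simp add: add.commute)
qed

lemma colored_factor:
  assumes "l \<ge> 1"
  shows "colored_eulerian l n = Ql l ^ n * Eul n"
proof -
  have fin: "finite {s. s permutes {1..n}}" by (simp add: finite_permutations)
  have "colored_eulerian l n = (\<Sum>s\<in>{s. s permutes {1..n}}. \<Sum>e\<in>colset l n. monom 1 (fexc l n (s, e)))"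
    unfolding colored_eulerian_def colored_perms_eq
    by (simp add: sum.cartesian_product)
  also have "\<dots> = (\<Sum>s\<in>{s. s permutes {1..n}}. Ql l ^ n * monom 1 (excp n s))"
  proof (rule sum.cong[OF refl])
    fix s assume "s \<in> {s. s permutes {1..n}}"
    have "(\<Sum>e\<in>colset l n. monom (1::nat) (fexc l n (s, e))) =
        (\<Sum>g\<in>PiE {1..n} (\<lambda>_. {..<l}). \<Prod>i\<in>{1..n}. monom 1 (if g i = 0 \<and> s i > i then l else g i))"
      unfolding colset_sum by (rule sum.cong[OF refl], rule fexc_ext0, assumption)
    also have "\<dots> = (\<Prod>i\<in>{1..n}. \<Sum>e<l. monom 1 (if e = 0 \<and> s i > i then l else e))"
      by (rule prod_sum_PiE[symmetric]) auto
    also have "\<dots> = (\<Prod>i\<in>{1..n}. Ql l * monom 1 (if s i > i then 1 else 0))"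
      using inner_sum[OF assms] by simp
    also have "\<dots> = Ql l ^ n * monom 1 (\<Sum>i\<in>{1..n}. if s i > i then 1 else 0)"
      by (simp only: prod.distrib monom_sum finite_atLeastAtMost prod_constant card_atLeastAtMost) simp
    also have "(\<Sum>i\<in>{1..n}. if s i > i then 1 else 0) = excp n s"
      unfolding excp_def by (rule card_filter_sum[symmetric]) simp
    finally show "(\<Sum>e\<in>colset l n. monom 1 (fexc l n (s, e))) = Ql l ^ n * monom 1 (excp n s)" .
  qed
  also have "\<dots> = Ql l ^ n * Eul n" by (simp add: Eul_def sum_distrib_left)
  finally show ?thesis .
qed




definition cnt :: "nat \<Rightarrow> nat \<Rightarrow> nat" where
  "cnt n k = card {s. s permutes {1..n} \<and> excp n s = k}"

lemma cnt_sum: "cnt n k = (\<Sum>s\<in>{s. s permutes {1..n}}. if excp n s = k then (1::nat) else 0)"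
proof -
  have "finite {s. s permutes {1..n}}" by (simp add: finite_permutations)
  then have "(\<Sum>s\<in>{s. s permutes {1..n}}. if excp n s = k then (1::nat) else 0) = card ({s. s permutes {1..n}} \<inter> {s. excp n s = k})"
    by (simp add: sum.If_cases)
  then show ?thesis unfolding cnt_def by (simp only: Int_def mem_Collect_eq)
qed

lemma coeff_Eul: "coeff (Eul n) k = cnt n k"
  unfolding Eul_def cnt_sum by (simp add: coeff_sum coeff_monom cong: if_cong)

lemma excp_insert_id:
  assumes "t permutes {1..n}"
  shows "excp (Suc n) t = excp n t"
proof -
  have "{i\<in>{1..Suc n}. t i > i} = {i\<in>{1..n}. t i > i}"
    using permutes_not_in[OF assms] by (auto simp: le_Suc_eq)
  then show ?thesis by (simp add: excp_def)
qed

lemma excp_insert: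
  assumes t: "t permutes {1..n}" and b: "b \<in> {1..n}"
  shows "excp (Suc n) (transpose (Suc n) b \<circ> t) =
     (if inv t b < b then excp n t else Suc (excp n t))"
proof -
  define j where "j = inv t b"
  have tj: "t j = b" unfolding j_def using permutes_inverses(1)[OF t] by simp
  have j: "j \<in> {1..n}" unfolding j_def using b permutes_in_image[OF permutes_inv[OF t]] by simp
  let ?A = "{i\<in>{1..n}. t i > i}"
  have eq: "{i\<in>{1..Suc n}. (transpose (Suc n) b \<circ> t) i > i} = insert j (?A - {j})"
  proof (rule set_eqI)
    fix i
    show "i \<in> {i\<in>{1..Suc n}. (transpose (Suc n) b \<circ> t) i > i} \<longleftrightarrow> i \<in> insert j (?A - {j})"
    proof (cases "i = Suc n")
      case True
      then have "t i = i" using permutes_not_in[OF t] by auto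
      then show ?thesis using True b j by (auto simp: transpose_def)
    next
      case False
      show ?thesis
      proof (cases "i = j")
        case True then show ?thesis using tj j b by (auto simp: transpose_def)
      next
        case ij: False
        show ?thesis
        proof (cases "i \<in> {1..n}")
          case True
          have "t i \<in> {1..n}" using True permutes_in_image[OF t] by simp
          moreover have "t i \<noteq> b" using tj ij permutes_inj[OF t] by (metis injD)
          ultimately have "(transpose (Suc n) b \<circ> t) i = t i" by (auto simp: transpose_def)
          then show ?thesis using True ij by auto
        next
          case nn: False
          then show ?thesis using False ij by auto
        qed
      qed
    qed
  qed
  have fin: "finite (?A - {j})" by simp
  have "card (insert j (?A - {j})) = Suc (card (?A-{j}))" by (rule card_insert_disjoint) auto
  then have "excp (Suc n) (transpose (Suc n) b \<circ> t) = Suc (card (?A - {j}))"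
    unfolding excp_def eq .
  also have "card (?A - {j}) = (if j \<in> ?A then card ?A - 1 else card ?A)"
    by (simp add: card_Diff_singleton_if)
  finally have F: "excp (Suc n) (transpose (Suc n) b \<circ> t) = Suc (if j \<in> ?A then card ?A - 1 else card ?A)" .
  have C1: "j \<in> ?A \<Longrightarrow> card ?A \<ge> 1"
  proof -
    assume "j \<in> ?A"
    then have "?A \<noteq> {}" by blast
    moreover have "finite ?A" by simp
    ultimately have "card ?A > 0" by (simp only: card_gt_0_iff) blast
    then show "card ?A \<ge> 1" by simp
  qed
  have jA: "j \<in> ?A \<longleftrightarrow> inv t b < b" using j tj unfolding j_def[symmetric] by simp
  have ex: "excp n t = card ?A" by (simp add: excp_def)
  show ?thesis
  proof (cases "inv t b < b")
    case True
    then have "j \<in> ?A" using jA by simp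
    then have "(if j \<in> ?A then card ?A - 1 else card ?A) = card ?A - 1" by (rule if_P)
    then have "excp (Suc n) (transpose (Suc n) b \<circ> t) = Suc (card ?A - 1)" using F by simp
    then have "excp (Suc n) (transpose (Suc n) b \<circ> t) = card ?A" using C1[OF \<open>j \<in> ?A\<close>] by simp
    then show ?thesis using True ex by simp
  next
    case False
    then have "j \<notin> ?A" using jA by simp
    then have "(if j \<in> ?A then card ?A - 1 else card ?A) = card ?A" by (rule if_not_P)
    then have "excp (Suc n) (transpose (Suc n) b \<circ> t) = Suc (card ?A)" using F by simp
    then show ?thesis using False ex by simp
  qed
qed

lemma card_inv_less:
  assumes t: "t permutes {1..n}"
  shows "card {b\<in>{1..n}. inv t b < b} = excp n t"
proof -
  have "{b\<in>{1..n}. inv t b < b} = t ` {i\<in>{1..n}. t i > i}"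
  proof (rule set_eqI)
    fix b show "b \<in> {b\<in>{1..n}. inv t b < b} \<longleftrightarrow> b \<in> t ` {i\<in>{1..n}. t i > i}"
    proof
      assume "b \<in> {b\<in>{1..n}. inv t b < b}"
      then show "b \<in> t ` {i\<in>{1..n}. t i > i}"
        using permutes_inverses[OF t] permutes_in_image[OF permutes_inv[OF t]]
        by (auto intro!: image_eqI[where x="inv t b"])
    next
      assume "b \<in> t ` {i\<in>{1..n}. t i > i}"
      then show "b \<in> {b\<in>{1..n}. inv t b < b}"
        using permutes_inverses[OF t] permutes_in_image[OF t] by auto
    qed
  qed
  moreover have "inj_on t {i\<in>{1..n}. t i > i}"
    using permutes_inj[OF t] by (auto intro: inj_on_subset)
  ultimately show ?thesis by (simp add: card_image excp_def)
qed


lemma excp_le: "t permutes {1..n} \<Longrightarrow> excp n t \<le> n"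
proof -
  have "card {i\<in>{1..n}. t i > i} \<le> card {1..n}" by (rule card_mono) auto
  then show ?thesis by (simp add: excp_def)
qed

lemma inner_count:
  assumes t: "t permutes {1..n}"
  shows "(\<Sum>b\<in>insert (Suc n) {1..n}. if excp (Suc n) (transpose (Suc n) b \<circ> t) = k then 1 else 0)
     = (k+1) * (if excp n t = k then 1 else 0) + (if k \<ge> 1 then (n+1-k) * (if excp n t = k - 1 then 1 else 0) else 0)"
proof -
  let ?e = "excp n t"
  have "(\<Sum>b\<in>insert (Suc n) {1..n}. if excp (Suc n) (transpose (Suc n) b \<circ> t) = k then 1 else 0)
     = (if ?e = k then 1 else 0) + (\<Sum>b\<in>{1..n}. if excp (Suc n) (transpose (Suc n) b \<circ> t) = k then 1 else 0)"
    by (simp add: excp_insert_id[OF t])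
  also have "(\<Sum>b\<in>{1..n}. if excp (Suc n) (transpose (Suc n) b \<circ> t) = k then 1 else (0::nat))
      = (\<Sum>b\<in>{1..n}. if inv t b < b then (if ?e = k then 1 else 0) else (if Suc ?e = k then 1 else 0))"
    by (rule sum.cong) (auto simp: excp_insert[OF t])
  also have "\<dots> = card {b\<in>{1..n}. inv t b < b} * (if ?e = k then 1 else 0)
       + card {b\<in>{1..n}. \<not> inv t b < b} * (if Suc ?e = k then 1 else 0)"
    by (simp add: sum.If_cases Int_def)
  also have "card {b\<in>{1..n}. \<not> inv t b < b} = n - ?e"
  proof -
    have "{b\<in>{1..n}. \<not> inv t b < b} = {1..n} - {b\<in>{1..n}. inv t b < b}" by auto
    moreover have sub: "{b\<in>{1..n}. inv t b < b} \<subseteq> {1..n}" by auto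
    ultimately show ?thesis using card_Diff_subset[OF _ sub] card_inv_less[OF t] by simp
  qed
  also have "(if ?e = k then 1 else 0) + (card {b\<in>{1..n}. inv t b < b} * (if ?e = k then 1 else 0)
       + (n - ?e) * (if Suc ?e = k then 1 else 0)) = (k+1) * (if excp n t = k then 1 else 0) + (if k \<ge> 1 then (n+1-k) * (if excp n t = k - 1 then 1 else 0) else 0)"
    using card_inv_less[OF t] excp_le[OF t] by auto
  finally show ?thesis .
qed

lemma cnt_rec:
  "cnt (Suc n) k = (k+1) * cnt n k + (if k \<ge> 1 then (n+1-k) * cnt n (k-1) else 0)"
proof -
  have ins: "{1..Suc n} = insert (Suc n) {1..n}" by auto
  have "cnt (Suc n) k = (\<Sum>b\<in>insert (Suc n) {1..n}. \<Sum>t\<in>{s. s permutes {1..n}}.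
        if excp (Suc n) (transpose (Suc n) b \<circ> t) = k then 1 else 0)"
    unfolding cnt_sum ins by (rule sum_over_permutations_insert) auto
  also have "\<dots> = (\<Sum>t\<in>{s. s permutes {1..n}}. \<Sum>b\<in>insert (Suc n) {1..n}.
        if excp (Suc n) (transpose (Suc n) b \<circ> t) = k then 1 else 0)"
    by (rule sum.swap)
  also have "\<dots> = (\<Sum>t\<in>{s. s permutes {1..n}}. (k+1) * (if excp n t = k then 1 else 0) +
       (if k \<ge> 1 then (n+1-k) * (if excp n t = k - 1 then 1 else 0) else 0))"
    by (rule sum.cong[OF refl], rule inner_count, simp)
  also have "\<dots> = (k+1) * cnt n k + (if k \<ge> 1 then (n+1-k) * cnt n (k-1) else 0)"
  proof (cases "k \<ge> 1")
    case True
    then show ?thesis unfolding cnt_sum by (simp only: if_True sum.distrib sum_distrib_left)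
  next
    case False
    then show ?thesis unfolding cnt_sum by (simp only: if_False sum.distrib sum_distrib_left add_0_right sum.neutral_const)
  qed
  finally show ?thesis .
qed

lemma cnt_0: "cnt 0 k = (if k = 0 then 1 else 0)"
proof -
  have "{s. s permutes {1..0::nat}} = {id}" by simp
  moreover have "excp 0 id = 0" by (simp add: excp_def)
  ultimately show ?thesis by (simp add: cnt_sum)
qed




definition good :: "(int \<Rightarrow> real) \<Rightarrow> int \<Rightarrow> bool" where
  "good x d \<longleftrightarrow> (\<forall>k. 0 \<le> x k) \<and> (\<forall>k. 0 < x k \<longleftrightarrow> 0 \<le> k \<and> k \<le> d)
     \<and> (\<forall>k. x (k-1) * x (k+1) \<le> (x k)^2) \<and> (\<forall>k. x (d - k) = x k)"

lemma tp2:
  assumes g: "good x d"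
  shows "x u * x (u + int m + 2) \<le> x (u+1) * x (u + int m + 1)"
proof (induction m)
  case 0
  have "x ((u+1) - 1) * x ((u+1) + 1) \<le> (x (u+1))^2" using g unfolding good_def by blast
  then show ?case by (simp add: power2_eq_square add.assoc)
next
  case (Suc m)
  define w where "w = u + int m + 2"
  have e1: "u + int (Suc m) + 2 = w + 1" "u + int (Suc m) + 1 = w" by (simp_all add: w_def)
  have nn: "\<And>k. 0 \<le> x k" using g by (auto simp: good_def)
  have pos: "\<And>k. 0 < x k \<longleftrightarrow> 0 \<le> k \<and> k \<le> d" using g by (auto simp: good_def)
  have lc: "x (w - 1) * x (w + 1) \<le> (x w)^2" using g by (auto simp: good_def)
  have e2: "u + int m + 2 = w" "u + int m + 1 = w - 1" by (simp_all add: w_def)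
  have IH: "x u * x w \<le> x (u+1) * x (w - 1)" using Suc unfolding e2 .
  show ?case unfolding e1
  proof (cases "x (w - 1) > 0")
    case False
    then have "x (w - 1) = 0" using nn[of "w - 1"] by simp
    then have "w - 1 < 0 \<or> w - 1 > d" using pos[of "w - 1"] by auto
    then show "x u * x (w + 1) \<le> x (u + 1) * x w"
    proof
      assume "w - 1 < 0" then have "x u = 0" using pos[of u] nn[of u] by (auto simp: w_def)
      then show ?thesis using nn by simp
    next
      assume "w - 1 > d" then have "x (w + 1) = 0" using pos[of "w + 1"] nn[of "w + 1"] by auto
      then show ?thesis using nn by simp
    qed
  next
    case True
    have "x (w - 1) * (x u * x (w + 1)) = x u * (x (w - 1) * x (w + 1))" by (simp add: algebra_simps)
    also have "\<dots> \<le> x u * (x w)^2" using mult_left_mono[OF lc nn[of u]] .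
    also have "\<dots> = (x u * x w) * x w" by (simp add: power2_eq_square)
    also have "\<dots> \<le> (x (u+1) * x (w - 1)) * x w" using mult_right_mono[OF IH nn[of w]] .
    also have "\<dots> = x (w - 1) * (x (u+1) * x w)" by (simp add: algebra_simps)
    finally show "x u * x (w + 1) \<le> x (u + 1) * x w" using True by (simp add: mult_le_cancel_left_pos)
  qed
qed

lemma tp2':
  assumes g: "good x d" and "u < v"
  shows "x u * x (v + 1) \<le> x (u+1) * x v"
proof -
  obtain m where m: "v = u + int m + 1" using assms(2)
    by (metis add.commute add.left_commute zless_iff_Suc_zadd of_nat_Suc)
  show ?thesis using tp2[OF g, of u m] unfolding m by (simp add: add.assoc)
qed


definition conv :: "(int \<Rightarrow> real) \<Rightarrow> (int \<Rightarrow> real) \<Rightarrow> int \<Rightarrow> int \<Rightarrow> real" where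
  "conv a b q k = (\<Sum>i\<in>{0..q}. a (k - i) * b i)"

lemma good_zero: "good x d \<Longrightarrow> (k < 0 \<or> k > d) \<Longrightarrow> x k = 0"
  unfolding good_def by (metis linorder_not_le order_less_le)

lemma conv_eq:
  assumes "good b q" "finite A" "{0..q} \<subseteq> A"
  shows "(\<Sum>i\<in>A. a (k - i) * b i) = conv a b q k"
proof -
  have z: "\<And>i. i \<in> A - {0..q} \<Longrightarrow> a (k - i) * b i = 0"
    using good_zero[OF assms(1)] by force
  show ?thesis unfolding conv_def
    by (rule sum.mono_neutral_right) (use assms z in auto)
qed

lemma conv_shift:
  assumes "good b q" "q \<ge> 0"
  shows "(\<Sum>i\<in>{-1..q+1}. a (k - i) * b (i+1)) = conv a b q (k+1)"
proof -
  have "(\<Sum>i\<in>{-1..q+1}. a (k - i) * b (i+1)) = (\<Sum>j\<in>{0..q+2}. a (k + 1 - j) * b j)"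
    by (rule sum.reindex_bij_witness[where i="\<lambda>j. j - 1" and j="\<lambda>i. i + 1"]) auto
  also have "\<dots> = conv a b q (k+1)" by (rule conv_eq) (use assms in auto)
  finally show ?thesis .
qed

lemma conv_lc:
  assumes ga: "good a p" and gb: "good b q" and q: "q \<ge> 0"
  shows "conv a b q (k-1) * conv a b q (k+1) \<le> (conv a b q k)^2"
proof -
  let ?R = "{-1..q+1}"
  have fin: "finite ?R" by simp
  have c0: "conv a b q k = (\<Sum>i\<in>?R. a (k - i) * b i)" by (rule conv_eq[symmetric]) (use gb in auto)
  have cm: "conv a b q (k-1) = (\<Sum>j\<in>?R. a (k - 1 - j) * b j)" by (rule conv_eq[symmetric]) (use gb in auto)
  have cp: "conv a b q (k+1) = (\<Sum>i\<in>?R. a (k - i) * b (i+1))" using conv_shift[OF gb q, of a k] by simp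
  have c0': "conv a b q k = (\<Sum>j\<in>?R. a (k - 1 - j) * b (j+1))" using conv_shift[OF gb q, of a "k-1"] by simp
  define g where "g i j = a (k - i) * a (k - 1 - j) * (b i * b (j+1) - b (i+1) * b j)" for i j
  have D: "(conv a b q k)^2 - conv a b q (k-1) * conv a b q (k+1) = (\<Sum>i\<in>?R. \<Sum>j\<in>?R. g i j)"
  proof -
    have "(conv a b q k)^2 = (\<Sum>i\<in>?R. a (k - i) * b i) * (\<Sum>j\<in>?R. a (k - 1 - j) * b (j+1))"
      by (simp add: power2_eq_square c0[symmetric] c0'[symmetric])
    also have "\<dots> = (\<Sum>i\<in>?R. \<Sum>j\<in>?R. a (k - i) * b i * (a (k - 1 - j) * b (j+1)))"
      by (rule sum_product)
    finally have 1: "(conv a b q k)^2 = \<dots>" .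
    have "conv a b q (k-1) * conv a b q (k+1) = (\<Sum>i\<in>?R. a (k - i) * b (i+1)) * (\<Sum>j\<in>?R. a (k - 1 - j) * b j)"
      by (simp add: cm cp mult.commute)
    also have "\<dots> = (\<Sum>i\<in>?R. \<Sum>j\<in>?R. a (k - i) * b (i+1) * (a (k - 1 - j) * b j))"
      by (rule sum_product)
    finally have 2: "conv a b q (k-1) * conv a b q (k+1) = \<dots>" .
    show ?thesis unfolding 1 2 g_def sum_subtractf[symmetric]
      by (rule sum.cong[OF refl], rule sum.cong[OF refl]) (simp add: algebra_simps)
  qed
  have sw: "(\<Sum>i\<in>?R. \<Sum>j\<in>?R. g i j) = (\<Sum>i\<in>?R. \<Sum>j\<in>?R. g j i)" by (rule sum.swap)
  have pt: "0 \<le> g i j + g j i" for i j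
  proof -
    have eq: "g i j + g j i = (a (k - i) * a (k - 1 - j) - a (k - j) * a (k - 1 - i)) * (b i * b (j+1) - b (i+1) * b j)"
      unfolding g_def by (simp add: algebra_simps)
    consider "i < j" | "i = j" | "j < i" by arith
    then show ?thesis
    proof cases
      case 1
      have b1: "b i * b (j+1) - b (i+1) * b j \<le> 0" using tp2'[OF gb 1] by simp
      have "a (k - 1 - j) * a ((k - 1 - i) + 1) \<le> a ((k - 1 - j) + 1) * a (k - 1 - i)"
        by (rule tp2'[OF ga]) (use 1 in simp)
      then have a1: "a (k - i) * a (k - 1 - j) - a (k - j) * a (k - 1 - i) \<le> 0" by (simp add: algebra_simps)
      show ?thesis unfolding eq using mult_nonpos_nonpos[OF a1 b1] .
    next
      case 2 then show ?thesis unfolding eq by simp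
    next
      case 3
      have b1: "b j * b (i+1) - b (j+1) * b i \<le> 0" using tp2'[OF gb 3] by simp
      have "a (k - 1 - i) * a ((k - 1 - j) + 1) \<le> a ((k - 1 - i) + 1) * a (k - 1 - j)"
        by (rule tp2'[OF ga]) (use 3 in simp)
      then have a1: "a (k - j) * a (k - 1 - i) - a (k - i) * a (k - 1 - j) \<le> 0" by (simp add: algebra_simps)
      have "0 \<le> (a (k - j) * a (k - 1 - i) - a (k - i) * a (k - 1 - j)) * (b j * b (i+1) - b (j+1) * b i)"
        using mult_nonpos_nonpos[OF a1 b1] .
      then show ?thesis unfolding eq by (simp add: algebra_simps)
    qed
  qed
  have "0 \<le> (\<Sum>i\<in>?R. \<Sum>j\<in>?R. g i j + g j i)"
    by (intro sum_nonneg pt)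
  also have "\<dots> = 2 * (\<Sum>i\<in>?R. \<Sum>j\<in>?R. g i j)"
    using sw by (simp add: sum.distrib)
  finally show ?thesis using D by simp
qed

lemma conv_good:
  assumes ga: "good a p" and gb: "good b q" and p: "p \<ge> 0" and q: "q \<ge> 0"
  shows "good (conv a b q) (p + q)"
proof -
  have nna: "\<And>k. 0 \<le> a k" and nnb: "\<And>k. 0 \<le> b k" using ga gb by (auto simp: good_def)
  have nn: "0 \<le> conv a b q k" for k unfolding conv_def by (intro sum_nonneg mult_nonneg_nonneg nna nnb)
  have pos: "0 < conv a b q k \<longleftrightarrow> 0 \<le> k \<and> k \<le> p + q" for k
  proof
    assume "0 < conv a b q k"
    then obtain i where i: "i \<in> {0..q}" "a (k - i) * b i \<noteq> 0" unfolding conv_def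
      by (metis (no_types, lifting) less_irrefl sum.neutral)
    then have "a (k - i) \<noteq> 0" by auto
    then have "0 \<le> k - i \<and> k - i \<le> p" using good_zero[OF ga] by force
    then show "0 \<le> k \<and> k \<le> p + q" using i(1) by auto
  next
    assume k: "0 \<le> k \<and> k \<le> p + q"
    define i0 where "i0 = max 0 (k - p)"
    have "i0 \<in> {0..q}" using k q unfolding i0_def by auto
    moreover have "0 < a (k - i0) * b i0"
    proof -
      have "0 < a (k - i0)" using ga k p unfolding good_def i0_def by auto
      moreover have "0 < b i0" using gb k q unfolding good_def i0_def by auto
      ultimately show ?thesis by simp
    qed
    ultimately show "0 < conv a b q k" unfolding conv_def
      by (intro sum_pos2[where i=i0]) (auto intro: mult_nonneg_nonneg nna nnb)
  qed
  have sym: "conv a b q (p + q - k) = conv a b q k" for k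
  proof -
    have sa: "\<And>j. a (p - j) = a j" and sb: "\<And>j. b (q - j) = b j" using ga gb by (auto simp: good_def)
    have "conv a b q (p + q - k) = (\<Sum>i\<in>{0..q}. a (p + q - k - i) * b i)" by (simp add: conv_def)
    also have "\<dots> = (\<Sum>i\<in>{0..q}. a (p + q - k - (q - i)) * b (q - i))"
      by (rule sum.reindex_bij_witness[where i="\<lambda>i. q - i" and j="\<lambda>i. q - i"]) auto
    also have "\<dots> = (\<Sum>i\<in>{0..q}. a (k - i) * b i)"
    proof (rule sum.cong[OF refl])
      fix i
      have "a (p + q - k - (q - i)) = a (p - (k - i))" by (simp add: algebra_simps)
      then show "a (p + q - k - (q - i)) * b (q - i) = a (k - i) * b i" using sa sb by simp
    qed
    finally show ?thesis by (simp add: conv_def)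
  qed
  show ?thesis unfolding good_def using nn pos sym conv_lc[OF ga gb q] by blast
qed




lemma kurtz_alg:
  fixes K N x0 x1 x2 x3 :: real
  assumes K: "K \<ge> 1" and NK: "N - K \<ge> 1"
    and nn: "x0 \<ge> 0" "x1 \<ge> 0" "x2 \<ge> 0" "x3 \<ge> 0"
    and h1: "x0*x2 \<le> x1^2" and h2: "x1*x3 \<le> x2^2" and h3: "x0*x3 \<le> x1*x2"
  shows "(K*x1 + (N+2-K)*x0) * ((K+2)*x3 + (N-K)*x2) \<le> ((K+1)*x2 + (N+1-K)*x1)^2"
proof -
  have t1: "(K*(K+2))*(x1*x3) \<le> (K*(K+2))*x2^2" by (rule mult_left_mono[OF h2]) (use K in simp)
  have t2: "((N+2-K)*(N-K))*(x0*x2) \<le> ((N+2-K)*(N-K))*x1^2" by (rule mult_left_mono[OF h1]) (use NK in simp)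
  have t3: "((N+2-K)*(K+2))*(x0*x3) \<le> ((N+2-K)*(K+2))*(x1*x2)" by (rule mult_left_mono[OF h3]) (use NK K in simp)
  have e1: "(K*x1 + (N+2-K)*x0) * ((K+2)*x3 + (N-K)*x2) = (K*(K+2))*(x1*x3) + (K*(N-K))*(x1*x2)
      + ((N+2-K)*(K+2))*(x0*x3) + ((N+2-K)*(N-K))*(x0*x2)" by (simp add: algebra_simps)
  have e2: "((K+1)*x2 + (N+1-K)*x1)^2 = (K*(K+2))*x2^2 + (K*(N-K))*(x1*x2) + ((N+2-K)*(K+2))*(x1*x2)
      + ((N+2-K)*(N-K))*x1^2 + (x2 - x1)^2" by (simp add: algebra_simps power2_eq_square)
  have "0 \<le> (x2 - x1)^2" by simp
  then show ?thesis unfolding e1 e2 using t1 t2 t3 by linarith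
qed

lemma kurtz_step:
  fixes x y :: "int \<Rightarrow> real" and n :: nat
  assumes g: "good x (int n - 1)" and n: "n \<ge> 1"
    and rec: "\<And>k. y k = (k+1) * x k + (int n + 1 - k) * x (k-1)"
  shows "good y (int n)"
proof -
  have nn: "\<And>k. 0 \<le> x k" and pos: "\<And>k. 0 < x k \<longleftrightarrow> 0 \<le> k \<and> k \<le> int n - 1"
    and lc: "\<And>k. x (k-1) * x (k+1) \<le> (x k)^2" and sym: "\<And>k. x (int n - 1 - k) = x k"
    using g by (auto simp: good_def)
  have z: "\<And>k. x k \<noteq> 0 \<Longrightarrow> 0 \<le> k \<and> k \<le> int n - 1" using nn pos by (metis order_le_less)
  have t1: "0 \<le> (k+1) * x k" for k
    using z[of k] nn[of k] by (cases "x k = 0") auto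
  have t2: "0 \<le> (int n + 1 - k) * x (k-1)" for k
    using z[of "k-1"] nn[of "k-1"] by (cases "x (k-1) = 0") auto
  have ynn: "0 \<le> y k" for k using t1 t2 rec by (simp add: add_nonneg_nonneg)
  have ypos: "0 < y k \<longleftrightarrow> 0 \<le> k \<and> k \<le> int n" for k
  proof
    assume "0 < y k"
    then have "(k+1) * x k \<noteq> 0 \<or> (int n + 1 - k) * x (k-1) \<noteq> 0" using rec by auto
    then show "0 \<le> k \<and> k \<le> int n" using z by fastforce
  next
    assume k: "0 \<le> k \<and> k \<le> int n"
    show "0 < y k"
    proof (cases "k \<le> int n - 1")
      case True
      then have "0 < (k+1) * x k" using k pos by simp
      then show ?thesis using rec t2[of k] by simp
    next
      case False
      then have "k = int n" using k by simp
      then have "0 < (int n + 1 - k) * x (k-1)" using pos n by simp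
      then show ?thesis using rec t1[of k] by simp
    qed
  qed
  have ysym: "y (int n - k) = y k" for k
  proof -
    have a: "x (int n - k) = x (k - 1)" using sym[of "k-1"] by simp
    have b: "x (int n - k - 1) = x k" using sym[of k] by (simp add: algebra_simps)
    show ?thesis using rec[of "int n - k"] rec[of k] a b by (simp add: algebra_simps)
  qed
  have ylc: "y (k-1) * y (k+1) \<le> (y k)^2" for k
  proof (cases "0 < y (k-1) \<and> 0 < y (k+1)")
    case False
    then have "y (k-1) * y (k+1) = 0" using ynn[of "k-1"] ynn[of "k+1"] by (auto simp: order_le_less)
    then show ?thesis by (metis zero_le_power2)
  next
    case True
    then have k: "1 \<le> k" "k \<le> int n - 1" using ypos[of "k-1"] ypos[of "k+1"] by auto
    have h3: "x (k-2) * x (k+1) \<le> x (k-1) * x k"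
      using tp2'[OF g, of "k-2" k] by simp
    have h1: "x (k-2) * x k \<le> (x (k-1))^2" using lc[of "k-1"] by simp
    have h2: "x (k-1) * x (k+1) \<le> (x k)^2" using lc[of k] .
    have "(real_of_int k * x (k-1) + (real n + 2 - real_of_int k) * x (k-2)) *
          ((real_of_int k + 2) * x (k+1) + (real n - real_of_int k) * x k)
        \<le> ((real_of_int k + 1) * x k + (real n + 1 - real_of_int k) * x (k-1))^2"
      by (rule kurtz_alg[OF _ _ nn nn nn nn h1 h2 h3]) (use k in auto)
    moreover have "y (k-1) = real_of_int k * x (k-1) + (real n + 2 - real_of_int k) * x (k-2)"
      using rec[of "k-1"] by (simp add: algebra_simps)
    moreover have "y (k+1) = (real_of_int k + 2) * x (k+1) + (real n - real_of_int k) * x k"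
      using rec[of "k+1"] by (simp add: algebra_simps)
    moreover have "y k = (real_of_int k + 1) * x k + (real n + 1 - real_of_int k) * x (k-1)"
      using rec[of k] by simp
    ultimately show ?thesis by simp
  qed
  show ?thesis unfolding good_def using ynn ypos ysym ylc by blast
qed




lemma good_incr_step:
  assumes g: "good x D" and k: "0 \<le> k" "2*(k+1) \<le> D"
  shows "x k \<le> x (k+1)"
proof (rule ccontr)
  assume "\<not> x k \<le> x (k+1)"
  then have dec: "x (k+1) < x k" by simp
  have nn: "\<And>k. 0 \<le> x k" and pos: "\<And>k. 0 < x k \<longleftrightarrow> 0 \<le> k \<and> k \<le> D"
    and lc: "\<And>k. x (k-1) * x (k+1) \<le> (x k)^2" and sym: "\<And>k. x (D - k) = x k"
    using g by (auto simp: good_def)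
  have chain: "k + int m + 1 \<le> D \<Longrightarrow> x (k + int m + 1) < x (k + int m)" for m
  proof (induction m)
    case 0 then show ?case using dec by simp
  next
    case (Suc m)
    define w where "w = k + int m + 1"
    have IH: "x w < x (w - 1)" using Suc unfolding w_def by simp
    have wD: "w + 1 \<le> D" using Suc.prems unfolding w_def by simp
    have pw: "0 < x w" using pos[of w] wD k unfolding w_def by simp
    have pw1: "0 < x (w - 1)" using pos[of "w-1"] wD k unfolding w_def by simp
    have "x (w - 1) * x (w + 1) \<le> (x w)^2" using lc[of w] .
    also have "\<dots> = x w * x w" by (simp add: power2_eq_square)
    also have "\<dots> < x (w - 1) * x w" using mult_strict_right_mono[OF IH pw] .
    finally have "x (w - 1) * x (w + 1) < x (w - 1) * x w" .
    then have "x (w + 1) < x w" using pw1 by (simp add: mult_less_cancel_left_pos)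
    then show ?case unfolding w_def by (simp add: ac_simps)
  qed
  define m where "m = nat (D - 2*k - 1)"
  have m: "k + int m = D - k - 1" unfolding m_def using k by simp
  have "k + int m + 1 \<le> D" using m k by simp
  then have "x (k + int m + 1) < x (k + int m)" by (rule chain)
  moreover have "k + int m + 1 = D - k" "k + int m = D - (k+1)" using m by simp_all
  ultimately have "x (D - k) < x (D - (k+1))" by simp
  then have "x k < x (k+1)" using sym by simp
  then show False using dec by simp
qed

lemma good_incr:
  assumes g: "good x D" and "0 \<le> i" "i \<le> j" "2*j \<le> D"
  shows "x i \<le> x j"
proof -
  have "x i \<le> x (i + int m)" if "2*(i + int m) \<le> D" for m
    using that
  proof (induction m)
    case 0 then show ?case by simp
  next
    case (Suc m)
    have "x i \<le> x (i + int m)" using Suc by simp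
    also have "\<dots> \<le> x (i + int m + 1)" by (rule good_incr_step[OF g]) (use Suc.prems assms in auto)
    finally show ?case by (simp add: ac_simps)
  qed
  from this[of "nat (j - i)"] show ?thesis using assms by simp
qed

definition sq :: "nat poly \<Rightarrow> int \<Rightarrow> real" where
  "sq P k = (if k < 0 then 0 else real (coeff P (nat k)))"

lemma sq_nat: "sq P (int i) = real (coeff P i)" by (simp add: sq_def)

lemma good_degree:
  assumes g: "good (sq P) (int d)"
  shows "degree P = d"
proof (rule antisym)
  show "degree P \<le> d"
  proof (rule degree_le, intro allI impI)
    fix i assume "d < i"
    then have "sq P (int i) = 0" using good_zero[OF g, of "int i"] by simp
    then show "coeff P i = 0" by (simp add: sq_nat)
  qed
  have "0 < sq P (int d)" using g by (simp add: good_def)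
  then have "coeff P d \<noteq> 0" by (simp add: sq_nat)
  then show "d \<le> degree P" by (rule le_degree)
qed

lemma sum_int_range: "(\<Sum>i\<in>{0..int m}. f i) = (\<Sum>i\<le>m. f (int i))"
  by (rule sum.reindex_bij_witness[where i="int" and j="nat"]) auto

lemma sq_mult:
  assumes gq: "good (sq Q) (int dq)"
  shows "sq (P * Q) k = conv (sq P) (sq Q) (int dq) k"
proof (cases "k < 0")
  case True
  have "conv (sq P) (sq Q) (int dq) k = 0" unfolding conv_def
    by (rule sum.neutral) (use True in \<open>auto simp: sq_def\<close>)
  then show ?thesis using True by (simp add: sq_def)
next
  case False
  define n where "n = nat k"
  have kn: "k = int n" using False n_def by simp
  have dq: "degree Q = dq" by (rule good_degree[OF gq])
  have "sq (P * Q) k = real (\<Sum>i\<le>n. coeff Q i * coeff P (n - i))"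
    by (simp add: sq_def kn coeff_mult mult.commute[of P Q])
  also have "\<dots> = (\<Sum>i\<le>n. sq P (k - int i) * sq Q (int i))"
    by (simp add: sq_def kn of_nat_diff nat_diff_distrib' mult.commute)
  also have "\<dots> = (\<Sum>i\<le>n + dq. sq P (k - int i) * sq Q (int i))"
  proof (rule sum.mono_neutral_left)
    show "\<forall>i\<in>{..n + dq} - {..n}. sq P (k - int i) * sq Q (int i) = 0" using kn by (auto simp: sq_def)
  qed auto
  also have "\<dots> = (\<Sum>i\<le>dq. sq P (k - int i) * sq Q (int i))"
  proof (rule sum.mono_neutral_right)
    show "\<forall>i\<in>{..n + dq} - {..dq}. sq P (k - int i) * sq Q (int i) = 0"
      using good_zero[OF gq] by auto
  qed auto
  also have "\<dots> = conv (sq P) (sq Q) (int dq) k"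
    unfolding conv_def sum_int_range ..
  finally show ?thesis .
qed

lemma good_mult:
  assumes gp: "good (sq P) (int dp)" and gq: "good (sq Q) (int dq)"
  shows "good (sq (P * Q)) (int (dp + dq))"
proof -
  have "sq (P * Q) = conv (sq P) (sq Q) (int dq)" using sq_mult[OF gq] by (simp add: fun_eq_iff)
  then show ?thesis using conv_good[OF gp gq] by simp
qed




lemma cnt_zero: "j \<ge> max n 1 \<Longrightarrow> cnt n j = 0"
proof (induction n arbitrary: j)
  case 0 then show ?case by (simp add: cnt_0)
next
  case (Suc n)
  have "cnt n j = 0" using Suc by simp
  moreover have "n + 1 - j = 0" using Suc.prems by simp
  ultimately show ?case by (simp add: cnt_rec)
qed

lemma sq_Eul_rec:
  assumes n: "n \<ge> 1"
  shows "sq (Eul (Suc n)) k = (k+1) * sq (Eul n) k + (int n + 1 - k) * sq (Eul n) (k-1)"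
proof -
  consider "k < 0" | "k = 0" | "k \<ge> 1" by arith
  then show ?thesis
  proof cases
    case 1 then show ?thesis by (simp add: sq_def)
  next
    case 2 then show ?thesis by (simp add: sq_def coeff_Eul cnt_rec)
  next
    case 3
    define j where "j = nat k"
    have kj: "k = int j" "j \<ge> 1" using 3 j_def by auto
    have r: "cnt (Suc n) j = (j+1) * cnt n j + (n+1-j) * cnt n (j-1)" using cnt_rec[of n j] kj by simp
    have km1: "sq (Eul n) (k-1) = real (cnt n (j-1))"
      using kj by (simp add: sq_def coeff_Eul nat_diff_distrib')
    show ?thesis
    proof (cases "j \<le> n + 1")
      case True
      have "real (cnt (Suc n) j) = (real j + 1) * real (cnt n j) + (real n + 1 - real j) * real (cnt n (j-1))"
      proof -
        have a: "real (cnt (Suc n) j) = real (j+1) * real (cnt n j) + real (n+1-j) * real (cnt n (j-1))"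
          unfolding r by (simp only: of_nat_add of_nat_mult)
        have b: "real (n+1-j) = real n + 1 - real j" using True by (simp add: of_nat_diff)
        show ?thesis unfolding a b by simp
      qed
      then show ?thesis using kj km1 by (simp add: sq_def coeff_Eul)
    next
      case False
      have "cnt n (j-1) = 0" by (rule cnt_zero) (use False n in auto)
      then show ?thesis using r kj km1 by (simp add: sq_def coeff_Eul algebra_simps)
    qed
  qed
qed

lemma good_Eul: "n \<ge> 1 \<Longrightarrow> good (sq (Eul n)) (int (n - 1))"
proof (induction n rule: nat_induct_at_least)
  case base
  have s: "sq (Eul 1) k = (if k = 0 then 1 else 0)" for k
  proof -
    have "cnt 1 j = (if j = 0 then 1 else 0)" for j
      using cnt_rec[of 0 j] by (simp add: cnt_0)
    then show ?thesis by (simp add: sq_def coeff_Eul)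
  qed
  show ?case unfolding good_def s by (auto simp: power2_eq_square)
next
  case (Suc n)
  have "good (sq (Eul (Suc n))) (int n)"
    by (rule kurtz_step[where x="sq (Eul n)"]) (use Suc sq_Eul_rec[OF Suc(1)] in auto)
  then show ?case by simp
qed

lemma coeff_Ql: "coeff (Ql l) k = (if k < l then 1 else 0)"
  by (simp add: Ql_def coeff_sum coeff_monom)

lemma good_Ql: "l \<ge> 1 \<Longrightarrow> good (sq (Ql l)) (int (l - 1))"
proof -
  assume l: "l \<ge> 1"
  have s: "sq (Ql l) k = (if 0 \<le> k \<and> k \<le> int l - 1 then 1 else 0)" for k
    by (auto simp: sq_def coeff_Ql)
  have lc: "sq (Ql l) (k-1) * sq (Ql l) (k+1) \<le> (sq (Ql l) k)^2" for k
    unfolding s by auto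
  show ?thesis unfolding good_def using lc l by (auto simp: s of_nat_diff)
qed

lemma good_main:
  assumes "l \<ge> 1" "n \<ge> 1"
  shows "good (sq (Ql l ^ m * Eul n)) (int (m * (l-1) + (n-1)))"
proof (induction m)
  case 0 then show ?case using good_Eul[OF assms(2)] by simp
next
  case (Suc m)
  have "good (sq (Ql l * (Ql l ^ m * Eul n))) (int ((l-1) + (m * (l-1) + (n-1))))"
    by (rule good_mult[OF good_Ql[OF assms(1)] Suc])
  moreover have "(l-1) + (m * (l-1) + (n-1)) = Suc m * (l-1) + (n-1)" by simp
  moreover have "Ql l * (Ql l ^ m * Eul n) = Ql l ^ Suc m * Eul n" by (simp add: mult.assoc)
  ultimately show ?case by metis
qed




theorem proposition4p8:
  fixes l n :: nat
  assumes "l \<ge> 1" and "n \<ge> 1"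
  shows "t_symmetric (colored_eulerian l n) \<and> log_concave_poly (colored_eulerian l n)
         \<and> t_unimodal (colored_eulerian l n)"
proof -
  define P where "P = colored_eulerian l n"
  define d where "d = n * (l-1) + (n-1)"
  have g: "good (sq P) (int d)" unfolding P_def d_def colored_factor[OF assms(1)]
    by (rule good_main[OF assms])
  have deg: "degree P = d" by (rule good_degree[OF g])
  have gnn: "\<And>k. 0 \<le> sq P k" and gpos: "\<And>k. 0 < sq P k \<longleftrightarrow> 0 \<le> k \<and> k \<le> int d"
    and glc: "\<And>k. sq P (k-1) * sq P (k+1) \<le> (sq P k)^2" and gsym: "\<And>k. sq P (int d - k) = sq P k"
    using g by (auto simp: good_def)
  have pos: "coeff P i > 0" if "i \<le> d" for i
    using gpos[of "int i"] that by (simp add: sq_nat)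
  have sym: "coeff P k = coeff P (d - k)" if "k \<le> d" for k
  proof -
    have "sq P (int (d - k)) = sq P (int k)" using gsym[of "int k"] that by (simp add: of_nat_diff)
    then show ?thesis by (simp add: sq_nat)
  qed
  have lc: "coeff P (k-1) * coeff P (k+1) \<le> coeff P k ^ 2" if "0 < k" for k
  proof -
    have "sq P (int k - 1) * sq P (int k + 1) \<le> (sq P (int k))^2" by (rule glc)
    moreover have "int k - 1 = int (k - 1)" "int k + 1 = int (k+1)" using that by auto
    ultimately have "real (coeff P (k-1)) * real (coeff P (k+1)) \<le> (real (coeff P k))^2"
      by (simp only: sq_nat)
    then show ?thesis by (simp only: of_nat_mult[symmetric] of_nat_power[symmetric] of_nat_le_iff)
  qed
  have incr: "coeff P i \<le> coeff P j" if "i \<le> j" "2 * j \<le> d" for i j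
  proof -
    have "sq P (int i) \<le> sq P (int j)" by (rule good_incr[OF g]) (use that in auto)
    then show ?thesis by (simp add: sq_nat)
  qed
  have P0: "P \<noteq> 0" using pos[of 0] by auto
  have low: "low_deg P = 0" unfolding low_deg_def
    by (rule Least_equality) (use pos[of 0] in auto)
  have ts: "t_symmetric P" unfolding t_symmetric_def low deg
  proof (intro conjI allI impI P0)
    fix k assume "k \<le> d - 0"
    then have "coeff P k = coeff P (d - k)" by (intro sym) simp
    then show "coeff P (0 + k) = coeff P (d - k)" by simp
  qed
  have lcp: "log_concave_poly P" unfolding log_concave_poly_def low deg
  proof (intro conjI allI impI P0)
    fix k assume "0 < k \<and> k < d"
    then show "coeff P (k - 1) * coeff P (k + 1) \<le> coeff P k ^ 2" by (intro lc) simp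
  qed
  have um: "t_unimodal P" unfolding t_unimodal_def low deg
  proof (intro conjI allI impI P0)
    fix i j assume "0 \<le> i \<and> i \<le> j \<and> j \<le> (0 + d) div 2"
    then show "coeff P i \<le> coeff P j" by (intro incr) auto
  next
    fix i j assume a: "(0 + d + 1) div 2 \<le> i \<and> i \<le> j \<and> j \<le> d"
    have "coeff P (d - j) \<le> coeff P (d - i)" by (rule incr) (use a in auto)
    moreover have "coeff P i = coeff P (d - i)" "coeff P j = coeff P (d - j)" using a by (intro sym; simp)+
    ultimately show "coeff P j \<le> coeff P i" by simp
  qed
  show ?thesis using ts lcp um unfolding P_def by simp
qed


end
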